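(* Let $v\in C(S^1,(0,\infty))$ be separable in $S^1$ and suppose $\max_{S^1}v>\min_{S^1}v$. Then there exist $\alpha_0\in[0,2\pi)$ and $\theta_1,\theta_2\in[0,\pi)$ such that: (i) $\theta_1+\theta_2<\pi$; (ii) $v^{-1}(\max_{S^1}v)=\{(\cos(\alpha_0+\theta),\sin(\alpha_0+\theta)):|\theta|\le\theta_1\}$ and $v^{-1}(\min_{S^1}v)=\{(\cos(\alpha_0+\pi+\theta),\sin(\alpha_0+\pi+\theta)):|\theta|\le\theta_2\}$; (iii) $v(x)=v(l_{\alpha_0}(x))$ for all $x\in S^1_{\alpha_0}$; (iv) the function $\alpha\mapsto v((\cos\alpha,\sin\alpha))$ is not constant and is nonincreasing on $[\alpha_0,\alpha_0+\pi)$.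
   Context: $S^1\subset\mathbb{R}^2$ is the unit circle. For $\alpha\in\mathbb{R}$, $S^1_\alpha=\{(\cos(\alpha+\theta),\sin(\alpha+\theta)):\theta\in(0,\pi)\}$ (an open half-circle), and for $x\in S^1$, $l_\alpha(x)$ denotes the reflection of $x$ across the line through the origin with direction $(\cos\alpha,\sin\alpha)$. A function $v\in C(S^1,\mathbb{R})$ is called separable in $S^1$ if for every $\alpha\in[0,2\pi)$, either $v(l_\alpha(x))\ge v(x)$ for all $x\in S^1_\alpha$, or $v(l_\alpha(x))\le v(x)$ for all $x\in S^1_\alpha$. *)

theory Defs
  imports "HOL-Analysis.Analysis"
begin

definition circ :: "(real \<times> real) set" where
  "circ = {p. (fst p)\<^sup>2 + (snd p)\<^sup>2 = 1}"

definition epoint :: "real \<Rightarrow> real \<times> real" where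
  "epoint t = (cos t, sin t)"

definition half_circ :: "real \<Rightarrow> (real \<times> real) set" where
  "half_circ a = {epoint (a + t) | t. 0 < t \<and> t < pi}"

text \<open>Reflection across the line through 0 with direction (cos a, sin a).\<close>
definition refl_line :: "real \<Rightarrow> real \<times> real \<Rightarrow> real \<times> real" where
  "refl_line a p = (let d = fst p * cos a + snd p * sin a
                    in (2 * d * cos a - fst p, 2 * d * sin a - snd p))"

definition separable :: "(real \<times> real \<Rightarrow> real) \<Rightarrow> bool" where
  "separable v \<longleftrightarrow> (\<forall>a\<in>{0..<2*pi}.
      (\<forall>x\<in>half_circ a. v (refl_line a x) \<ge> v x) \<or>
      (\<forall>x\<in>half_circ a. v (refl_line a x) \<le> v x))"

end

theory Submission imports Defs begin

definition Lp :: "(real \<Rightarrow> real) \<Rightarrow> real \<Rightarrow> bool" where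
  "Lp f a \<longleftrightarrow> (\<forall>t. 0 < t \<and> t < pi \<longrightarrow> f (a + t) \<le> f (a - t))"
definition Rp :: "(real \<Rightarrow> real) \<Rightarrow> real \<Rightarrow> bool" where
  "Rp f a \<longleftrightarrow> (\<forall>t. 0 < t \<and> t < pi \<longrightarrow> f (a - t) \<le> f (a + t))"

lemma per_nat:
  fixes f :: "real \<Rightarrow> real"
  assumes per: "\<And>x. f (x + 2*pi) = f x"
  shows "f (x + 2*pi*real n) = f x"
proof (induction n)
  case (Suc n)
  have "f (x + 2*pi*real (Suc n)) = f ((x + 2*pi*real n) + 2*pi)" by (simp add: algebra_simps)
  also have "\<dots> = f x" using per Suc by simp
  finally show ?case .
qed simp

lemma per_int:
  fixes f :: "real \<Rightarrow> real"
  assumes per: "\<And>x. f (x + 2*pi) = f x"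
  shows "f (x + 2*pi * of_int k) = f x"
proof (cases "k \<ge> 0")
  case True
  then obtain n where "k = int n" using nonneg_int_cases by blast
  then show ?thesis using per_nat[of f, OF per] by simp
next
  case False
  then obtain n where k: "k = - int n" using nonpos_int_cases by (metis linorder_not_le order_less_imp_le)
  have "f (x + 2*pi * of_int k) = f ((x + 2*pi * of_int k) + 2*pi*real n)"
    using per_nat[of f, OF per] by simp
  also have "\<dots> = f x" using k by simp
  finally show ?thesis .
qed
lemma reduce:
  fixes a c :: real
  obtains k :: int where "a - 2*pi * of_int k \<in> {c..<c+2*pi}"
proof -
  define k where "k = \<lfloor>(a - c)/(2*pi)\<rfloor>"
  have p: "2*pi > 0" by simp
  have "of_int k \<le> (a - c)/(2*pi)" "(a - c)/(2*pi) < of_int k + 1"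
    unfolding k_def by linarith+
  then have "2*pi * of_int k \<le> a - c" "a - c < 2*pi*(of_int k + 1)"
    using p by (simp_all add: field_simps)
  then have "a - 2*pi * of_int k \<in> {c..<c+2*pi}" by (simp add: algebra_simps)
  then show ?thesis using that by blast
qed

lemma Lp_shift:
  fixes f :: "real \<Rightarrow> real"
  assumes per: "\<And>x. f (x + 2*pi) = f x"
  shows "Lp f (a + 2*pi * of_int k) \<longleftrightarrow> Lp f a"
proof -
  have "\<And>t. f (a + 2*pi * of_int k + t) = f (a + t)" "\<And>t. f (a + 2*pi * of_int k - t) = f (a - t)"
    using per_int[of f, OF per, of "a + _" k] per_int[of f, OF per, of "a - _" k] by (simp_all add: algebra_simps)
  then show ?thesis unfolding Lp_def by simp
qed

lemma Rp_shift:
  fixes f :: "real \<Rightarrow> real"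
  assumes per: "\<And>x. f (x + 2*pi) = f x"
  shows "Rp f (a + 2*pi * of_int k) \<longleftrightarrow> Rp f a"
proof -
  have "\<And>t. f (a + 2*pi * of_int k + t) = f (a + t)" "\<And>t. f (a + 2*pi * of_int k - t) = f (a - t)"
    using per_int[of f, OF per, of "a + _" k] per_int[of f, OF per, of "a - _" k] by (simp_all add: algebra_simps)
  then show ?thesis unfolding Rp_def by simp
qed

lemma LR_all:
  fixes f :: "real \<Rightarrow> real"
  assumes per: "\<And>x. f (x + 2*pi) = f x"
    and h: "\<And>a. a \<in> {0..<2*pi} \<Longrightarrow> Lp f a \<or> Rp f a"
  shows "Lp f a \<or> Rp f a"
proof -
  obtain k :: int where k: "a - 2*pi * of_int k \<in> {0..<2*pi}" using reduce[of a 0] by auto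
  have "Lp f (a - 2*pi * of_int k + 2*pi * of_int k) \<or> Rp f (a - 2*pi * of_int k + 2*pi * of_int k)"
    using h[OF k] Lp_shift[of f, OF per] Rp_shift[of f, OF per] by blast
  then show ?thesis by simp
qed

lemma R_iff_L:
  fixes f :: "real \<Rightarrow> real"
  assumes per: "\<And>x. f (x + 2*pi) = f x"
  shows "Rp f a \<longleftrightarrow> Lp f (a + pi)"
proof -
  have e: "f (a - pi + t) = f (a + pi + t)" for t
    using per[of "a - pi + t"] by (simp add: algebra_simps)
  show ?thesis
  proof
    assume R: "Rp f a"
    show "Lp f (a + pi)" unfolding Lp_def
    proof (intro allI impI)
      fix t assume t: "0 < t \<and> t < pi"
      have "f (a - (pi - t)) \<le> f (a + (pi - t))" using R t unfolding Rp_def by auto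
      then show "f (a + pi + t) \<le> f (a + pi - t)" using e[of t] by (simp add: algebra_simps)
    qed
  next
    assume L: "Lp f (a + pi)"
    show "Rp f a" unfolding Rp_def
    proof (intro allI impI)
      fix t assume t: "0 < t \<and> t < pi"
      have "f (a + pi + (pi - t)) \<le> f (a + pi - (pi - t))" using L[unfolded Lp_def, rule_format, of "pi - t"] t by simp
      moreover have "f (a + pi + (pi - t)) = f (a - t)" using per[of "a - t"] by (simp add: algebra_simps)
      moreover have "f (a + pi - (pi - t)) = f (a + t)" by (simp add: algebra_simps)
      ultimately show "f (a - t) \<le> f (a + t)" by simp
    qed
  qed
qed

lemma axis_all:
  fixes f :: "real \<Rightarrow> real"
  assumes per: "\<And>x. f (x + 2*pi) = f x" and L: "Lp f c" and R: "Rp f c"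
  shows "f (c - s) = f (c + s)"
proof -
  have A: "f (c - s) = f (c + s)" if "0 \<le> s" "s \<le> pi" for s
  proof -
    have "s = 0 \<or> s = pi \<or> (0 < s \<and> s < pi)" using that by linarith
    then consider "s = 0" | "s = pi" | "0 < s \<and> s < pi" by blast
    then show ?thesis
    proof cases
      case 2 then show ?thesis using per[of "c - pi"] by (simp add: algebra_simps)
    next
      case 3 then show ?thesis using L R unfolding Lp_def Rp_def by (meson order_antisym)
    qed simp
  qed
  have B: "f (c - s) = f (c + s)" if "-pi \<le> s" "s \<le> pi" for s
  proof (cases "s \<ge> 0")
    case True then show ?thesis using A that by simp
  next
    case False then show ?thesis using A[of "-s"] that by simp
  qed
  obtain k :: int where k: "s - 2*pi * of_int k \<in> {-pi..<-pi+2*pi}" using reduce[of s "-pi"] by auto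
  define s' where "s' = s - 2*pi * of_int k"
  have "f (c + s) = f (c + s' + 2*pi * of_int k)" by (simp add: s'_def)
  also have "\<dots> = f (c + s')" by (rule per_int[of f, OF per])
  also have "\<dots> = f (c - s')" using B[of s'] k s'_def by simp
  also have "\<dots> = f (c - s' + 2*pi * of_int (-k))" by (rule per_int[of f, OF per, symmetric])
  also have "\<dots> = f (c - s)" by (simp add: s'_def)
  finally show ?thesis by simp
qed


lemma key:
  fixes f :: "real \<Rightarrow> real"
  assumes per: "\<And>x. f (x + 2*pi) = f x"
    and LR: "\<And>a. Lp f a \<or> Rp f a"
    and ax1: "\<And>s. f (a - s) = f (a + s)" and ax2: "\<And>s. f (c - s) = f (c + s)"
    and d: "0 < c - a" "c - a < pi"
  shows "f x = f y"
proof -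
  have P2: "f (x + 2*(c-a)) = f x" for x
  proof -
    have "f (x + 2*(c-a)) = f (c + (x + 2*(c-a) - c))" by (simp add: algebra_simps)
    also have "\<dots> = f (c - (x + 2*(c-a) - c))" using ax2 by metis
    also have "\<dots> = f (a + (a - x))" by (simp add: algebra_simps)
    also have "\<dots> = f (a - (a - x))" using ax1 by metis
    also have "\<dots> = f x" by simp
    finally show ?thesis .
  qed
  obtain P where P: "0 < P" "P \<le> pi" "\<And>x. f (x + P) = f x"
  proof (cases "c - a \<le> pi/2")
    case True then show ?thesis using that[of "2*(c-a)"] P2 d by auto
  next
    case False
    have "f (x + (2*pi - 2*(c-a))) = f x" for x
    proof -
      have "f (x + (2*pi - 2*(c-a))) = f ((x - 2*(c-a)) + 2*pi)" by (simp add: algebra_simps)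
      also have "\<dots> = f (x - 2*(c-a))" by (rule per)
      also have "\<dots> = f (x - 2*(c-a) + 2*(c-a))" by (rule P2[symmetric])
      finally show ?thesis by simp
    qed
    then show ?thesis using that[of "2*pi - 2*(c-a)"] False d by auto
  qed
  have C: "f (u + \<delta>) = f u" if "0 < \<delta>" "\<delta> < P" for u \<delta>
  proof -
    define t1 where "t1 = P/2 + \<delta>/2"
    define t2 where "t2 = P/2 - \<delta>/2"
    define \<alpha> where "\<alpha> = u + t1"
    have t1: "0 < t1" "t1 < pi" and t2: "0 < t2" "t2 < pi" using that P by (auto simp: t1_def t2_def)
    have e1: "\<alpha> - t1 = u" by (simp add: \<alpha>_def)
    have e2: "f (\<alpha> + t1) = f (u + \<delta>)" using P(3)[of "u+\<delta>"] by (simp add: \<alpha>_def t1_def algebra_simps)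
    have e3: "f (\<alpha> + t2) = f u" using P(3)[of u] by (simp add: \<alpha>_def t1_def t2_def algebra_simps)
    have e4: "\<alpha> - t2 = u + \<delta>" by (simp add: \<alpha>_def t1_def t2_def)
    from LR[of \<alpha>] show ?thesis
    proof
      assume "Lp f \<alpha>"
      then have "f (\<alpha>+t1) \<le> f (\<alpha> - t1)" "f (\<alpha> + t2) \<le> f (\<alpha> - t2)" using t1 t2 unfolding Lp_def by auto
      then show ?thesis using e1 e2 e3 e4 by simp
    next
      assume "Rp f \<alpha>"
      then have "f (\<alpha>-t1) \<le> f (\<alpha> + t1)" "f (\<alpha> - t2) \<le> f (\<alpha> + t2)" using t1 t2 unfolding Rp_def by auto
      then show ?thesis using e1 e2 e3 e4 by simp
    qed
  qed
  have N: "f (z + real n * P) = f z" for z n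
  proof (induction n)
    case (Suc n)
    have "f (z + real (Suc n) * P) = f ((z + real n * P) + P)" by (simp add: algebra_simps)
    also have "\<dots> = f z" using P(3) Suc by simp
    finally show ?case .
  qed simp
  define n where "n = nat \<lceil>(x-y)/P\<rceil>"
  have "(x-y)/P \<le> real n" unfolding n_def by linarith
  then have "x - y \<le> real n * P" using P(1) by (simp add: divide_le_eq)
  define w where "w = x - real n * P"
  have fw: "f w = f x" using N[of w n] by (simp add: w_def)
  have yw: "0 \<le> (y - w)/P" using P(1) \<open>x - y \<le> real n * P\<close> by (simp add: w_def)
  define k where "k = nat \<lfloor>(y-w)/P\<rfloor>"
  have kk: "real k = of_int \<lfloor>(y-w)/P\<rfloor>" using yw unfolding k_def by simp
  have "real k \<le> (y-w)/P" "(y-w)/P < real k + 1" using kk by linarith+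
  then have r1: "real k * P \<le> y - w" "y - w < real k * P + P" using P(1) by (simp_all add: field_simps)
  define r where "r = y - w - real k * P"
  have "f y = f ((w + r) + real k * P)" by (simp add: r_def)
  also have "\<dots> = f (w + r)" by (rule N)
  also have "\<dots> = f w"
  proof (cases "r = 0")
    case False
    then show ?thesis using C[of r w] r1 unfolding r_def by auto
  qed simp
  finally show ?thesis using fw by simp
qed

lemma closed_L:
  fixes f :: "real \<Rightarrow> real"
  assumes cf: "continuous_on UNIV f"
  shows "closed {a. Lp f a}" "closed {a. Rp f a}"
proof -
  have c1: "continuous_on UNIV (\<lambda>a. f (a + t))" "continuous_on UNIV (\<lambda>a. f (a - t))" for t
    by (intro continuous_on_compose2[OF cf] continuous_intros; simp)+
  have "{a. Lp f a} = (\<Inter>t\<in>{0<..<pi}. {a. f (a + t) \<le> f (a - t)})" unfolding Lp_def by auto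
  moreover have "closed (\<Inter>t\<in>{0<..<pi}. {a. f (a + t) \<le> f (a - t)})"
    by (intro closed_INT ballI closed_Collect_le c1)
  ultimately show "closed {a. Lp f a}" by simp
  have "{a. Rp f a} = (\<Inter>t\<in>{0<..<pi}. {a. f (a - t) \<le> f (a + t)})" unfolding Rp_def by auto
  moreover have "closed (\<Inter>t\<in>{0<..<pi}. {a. f (a - t) \<le> f (a + t)})"
    by (intro closed_INT ballI closed_Collect_le c1)
  ultimately show "closed {a. Rp f a}" by simp
qed

lemma axis_exists:
  fixes f :: "real \<Rightarrow> real"
  assumes per: "\<And>x. f (x + 2*pi) = f x"
    and LR: "\<And>a. Lp f a \<or> Rp f a"
    and cf: "continuous_on UNIV f"
  shows "\<exists>c. Lp f c \<and> Rp f c"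
proof (rule ccontr)
  assume nc: "\<not> ?thesis"
  have ne: "{a. Lp f a} \<noteq> {} \<and> {a. Rp f a} \<noteq> {}"
  proof (cases "Lp f 0")
    case True
    then have "Rp f (-pi)" using R_iff_L[of f, OF per, of "-pi"] by simp
    then show ?thesis using True by auto
  next
    case False
    then have "Rp f 0" using LR by blast
    then have "Lp f pi" using R_iff_L[of f, OF per, of 0] by simp
    then show ?thesis using \<open>Rp f 0\<close> by auto
  qed
  have "connected (UNIV :: real set)" by simp
  then show False unfolding connected_closed
    using closed_L[OF cf] ne nc LR by blast
qed

lemma mono_side:
  fixes f :: "real \<Rightarrow> real"
  assumes per: "\<And>x. f (x + 2*pi) = f x"
    and LR: "\<And>a. Lp f a \<or> Rp f a"
    and cf: "continuous_on UNIV f"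
    and L0: "Lp f a0" and R0: "Rp f a0"
    and nc: "f x \<noteq> f y"
  shows "(\<forall>\<alpha>\<in>{a0..a0+pi}. Lp f \<alpha>) \<or> (\<forall>\<alpha>\<in>{a0..a0+pi}. Rp f \<alpha>)"
proof (rule ccontr)
  assume "\<not> ?thesis"
  then obtain \<alpha>1 \<alpha>2 where a1: "\<alpha>1 \<in> {a0..a0+pi}" "\<not> Lp f \<alpha>1" and a2: "\<alpha>2 \<in> {a0..a0+pi}" "\<not> Rp f \<alpha>2"
    by blast
  have Lpi: "Lp f (a0 + pi)" using R_iff_L[of f, OF per, of a0] R0 by simp
  have "Rp f (a0 + pi) \<longleftrightarrow> Lp f (a0 + pi + pi)" using R_iff_L[of f, OF per] by blast
  moreover have "Lp f (a0 + pi + pi) \<longleftrightarrow> Lp f a0" using Lp_shift[of f, OF per, of a0 1] by (simp add: ac_simps)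
  ultimately have Rpi: "Rp f (a0 + pi)" using L0 by simp
  have i1: "a0 < \<alpha>1" "\<alpha>1 < a0 + pi" using a1 L0 Lpi by (auto simp: less_le)
  have i2: "a0 < \<alpha>2" "\<alpha>2 < a0 + pi" using a2 R0 Rpi by (auto simp: less_le)
  define S where "S = {min \<alpha>1 \<alpha>2 .. max \<alpha>1 \<alpha>2}"
  have "connected S" unfolding S_def by simp
  moreover have "\<alpha>1 \<in> S" "\<alpha>2 \<in> S" unfolding S_def by auto
  ultimately obtain c where c: "c \<in> S" "Lp f c" "Rp f c"
    unfolding connected_closed using closed_L[OF cf] LR a1 a2 by blast
  have ci: "0 < c - a0" "c - a0 < pi" using c(1) i1 i2 unfolding S_def by auto
  have "f x = f y"
    by (rule key[of f a0 c, OF per LR axis_all[of f, OF per L0 R0] axis_all[of f, OF per c(2,3)] ci])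
  then show False using nc by simp
qed


lemma epoint_circ: "epoint t \<in> circ" by (simp add: circ_def epoint_def)

lemma circ_epoint: "x \<in> circ \<Longrightarrow> \<exists>s. x = epoint s"
  unfolding circ_def epoint_def
  by (metis (mono_tags, lifting) mem_Collect_eq prod.collapse sincos_total_2pi)

lemma epoint_int: "epoint (x + 2*pi * of_int k) = epoint x"
  by (simp add: epoint_def cos_add sin_add)

lemma epoint_2pi: "epoint (x + 2*pi) = epoint x" by (simp add: epoint_def)

lemma refl_epoint: "refl_line a (epoint (a + t)) = epoint (a - t)"
proof -
  have d: "cos (a+t) * cos a + sin (a+t) * sin a = cos t" using cos_diff[of "a+t" a] by simp
  show ?thesis unfolding refl_line_def epoint_def Let_def fst_conv snd_conv d
    by (simp add: cos_add cos_diff sin_add sin_diff algebra_simps)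
qed

lemma final:
  fixes v :: "real \<times> real \<Rightarrow> real" and f :: "real \<Rightarrow> real"
  assumes fd: "\<And>t. f t = v (epoint t)"
    and cf: "continuous_on UNIV f"
    and per: "\<And>x. f (x + 2*pi) = f x"
    and L0: "Lp f a0" and R0: "Rp f a0"
    and LJ: "\<forall>\<alpha>\<in>{a0..a0+pi}. Lp f \<alpha>"
    and a0: "a0 \<in> {0..<2*pi}"
    and nonconst: "(SUP x\<in>circ. v x) > (INF x\<in>circ. v x)"
  shows "\<exists>a0 t1 t2. a0 \<in> {0..<2*pi} \<and> t1 \<in> {0..<pi} \<and> t2 \<in> {0..<pi} \<and>
    t1 + t2 < pi \<and>
    {x\<in>circ. v x = (SUP y\<in>circ. v y)} = {epoint (a0 + t) | t. \<bar>t\<bar> \<le> t1} \<and>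
    {x\<in>circ. v x = (INF y\<in>circ. v y)} = {epoint (a0 + pi + t) | t. \<bar>t\<bar> \<le> t2} \<and>
    (\<forall>x\<in>half_circ a0. v x = v (refl_line a0 x)) \<and>
    (\<exists>a b. v (epoint a) \<noteq> v (epoint b)) \<and>
    (\<forall>a b. a0 \<le> a \<and> a \<le> b \<and> b < a0 + pi \<longrightarrow> v (epoint b) \<le> v (epoint a))"
proof -
  have mono: "f b \<le> f a" if "a0 \<le> a" "a \<le> b" "b \<le> a0 + pi" for a b
  proof (cases "a = b")
    case False
    define \<alpha> where "\<alpha> = (a+b)/2"
    define \<theta> where "\<theta> = (b-a)/2"
    have "Lp f \<alpha>" using LJ that by (auto simp: \<alpha>_def)
    moreover have "0 < \<theta>" "\<theta> < pi" using that False pi_gt_zero by (auto simp: \<theta>_def)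
    ultimately have "f (\<alpha> + \<theta>) \<le> f (\<alpha> - \<theta>)" unfolding Lp_def by blast
    moreover have "\<alpha> + \<theta> = b" "\<alpha> - \<theta> = a" by (simp_all add: \<alpha>_def \<theta>_def field_simps)
    ultimately show ?thesis by simp
  qed simp
  have sym: "f (a0 - s) = f (a0 + s)" for s by (rule axis_all[of f, OF per L0 R0])
  have abs: "f (a0 + t) = f (a0 + \<bar>t\<bar>)" for t
    using sym[of "-t"] by (cases "t \<ge> 0") auto
  have rep: "\<exists>t. \<bar>t\<bar> \<le> pi \<and> x = epoint (a0 + t)" if xc: "x \<in> circ" for x
  proof -
    obtain s where s: "x = epoint s" using circ_epoint[OF xc] by blast
    obtain k :: int where k: "s - 2*pi * of_int k \<in> {a0 - pi..<a0-pi+2*pi}" using reduce[of s "a0 - pi"] by blast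
    have "epoint (a0 + (s - 2*pi * of_int k - a0)) = epoint (s + 2*pi * of_int (-k))" by simp
    also have "\<dots> = x" using s epoint_int by metis
    finally show ?thesis using k by (intro exI[of _ "s - 2*pi * of_int k - a0"]) auto
  qed
  define Mx where "Mx = f a0"
  define Mn where "Mn = f (a0 + pi)"
  have bnd: "Mn \<le> v x \<and> v x \<le> Mx" if xc: "x \<in> circ" for x
  proof -
    obtain t where t: "\<bar>t\<bar> \<le> pi" "x = epoint (a0 + t)" using rep[OF xc] by blast
    have "v x = f (a0 + \<bar>t\<bar>)" using t abs fd by simp
    moreover have "f (a0 + pi) \<le> f (a0 + \<bar>t\<bar>)" "f (a0 + \<bar>t\<bar>) \<le> f (a0 + 0)" using t by (intro mono; simp)+
    ultimately show ?thesis by (simp add: Mx_def Mn_def)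
  qed
  have SUPe: "(SUP x\<in>circ. v x) = Mx"
    by (rule cSup_eq_maximum) (use bnd epoint_circ fd Mx_def in auto)
  have INFe: "(INF x\<in>circ. v x) = Mn"
    by (rule cInf_eq_minimum) (use bnd epoint_circ fd Mn_def in auto)
  have MM: "Mn < Mx" using nonconst SUPe INFe by simp
  have cg: "continuous_on UNIV (\<lambda>r. f (a0 + r))"
    by (intro continuous_on_compose2[OF cf] continuous_intros; simp)
  define S1 where "S1 = {r. 0 \<le> r \<and> r \<le> pi \<and> f (a0 + r) = Mx}"
  define S2 where "S2 = {r. 0 \<le> r \<and> r \<le> pi \<and> f (a0 + r) = Mn}"
  have cl1: "closed S1" unfolding S1_def
    by (intro closed_Collect_conj closed_Collect_le closed_Collect_eq cg continuous_intros)
  have cl2: "closed S2" unfolding S2_def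
    by (intro closed_Collect_conj closed_Collect_le closed_Collect_eq cg continuous_intros)
  have b1: "bdd_above S1" by (rule bdd_aboveI[of _ pi]) (auto simp: S1_def)
  have b2: "bdd_below S2" by (rule bdd_belowI[of _ 0]) (auto simp: S2_def)
  have n1: "0 \<in> S1" by (simp add: S1_def Mx_def)
  have n2: "pi \<in> S2" by (simp add: S2_def Mn_def)
  define t1 where "t1 = Sup S1"
  define s2 where "s2 = Inf S2"
  have t1S: "t1 \<in> S1" unfolding t1_def using closed_contains_Sup[OF _ b1 cl1] n1 by blast
  have s2S: "s2 \<in> S2" unfolding s2_def using closed_contains_Inf[OF _ b2 cl2] n2 by blast
  have t1u: "r \<le> t1" if "r \<in> S1" for r unfolding t1_def by (rule cSup_upper[OF that b1])
  have s2l: "s2 \<le> r" if "r \<in> S2" for r unfolding s2_def by (rule cInf_lower[OF that b2])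
  have t1p: "0 \<le> t1" "t1 \<le> pi" "f (a0 + t1) = Mx" using t1S by (auto simp: S1_def)
  have s2p: "0 \<le> s2" "s2 \<le> pi" "f (a0 + s2) = Mn" using s2S by (auto simp: S2_def)
  have ts: "t1 < s2"
  proof (rule ccontr)
    assume "\<not> t1 < s2"
    then have "f (a0 + t1) \<le> f (a0 + s2)" using t1p s2p by (intro mono) auto
    then show False using t1p s2p MM by simp
  qed
  define t2 where "t2 = pi - s2"
  have maxset: "{x\<in>circ. v x = Mx} = {epoint (a0 + t) | t. \<bar>t\<bar> \<le> t1}"
  proof (intro set_eqI iffI)
    fix x assume x: "x \<in> {x\<in>circ. v x = Mx}"
    obtain t where t: "\<bar>t\<bar> \<le> pi" "x = epoint (a0 + t)" using rep x by blast
    have "f (a0 + \<bar>t\<bar>) = Mx" using t x abs fd by simp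
    then have "\<bar>t\<bar> \<in> S1" using t by (simp add: S1_def)
    then show "x \<in> {epoint (a0 + t) | t. \<bar>t\<bar> \<le> t1}" using t t1u by blast
  next
    fix x assume "x \<in> {epoint (a0 + t) | t. \<bar>t\<bar> \<le> t1}"
    then obtain t where t: "\<bar>t\<bar> \<le> t1" "x = epoint (a0 + t)" by blast
    have "f (a0 + t1) \<le> f (a0 + \<bar>t\<bar>)" "f (a0 + \<bar>t\<bar>) \<le> f (a0 + 0)" using t t1p by (intro mono; simp)+
    then have "v x = Mx" using t abs fd t1p by (simp add: Mx_def)
    then show "x \<in> {x\<in>circ. v x = Mx}" using t epoint_circ by simp
  qed
  have minset: "{x\<in>circ. v x = Mn} = {epoint (a0 + pi + t) | t. \<bar>t\<bar> \<le> t2}"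
  proof (intro set_eqI iffI)
    fix x assume x: "x \<in> {x\<in>circ. v x = Mn}"
    obtain t where t: "\<bar>t\<bar> \<le> pi" "x = epoint (a0 + t)" using rep x by blast
    have "f (a0 + \<bar>t\<bar>) = Mn" using t x abs fd by simp
    then have "\<bar>t\<bar> \<in> S2" using t by (simp add: S2_def)
    then have st: "s2 \<le> \<bar>t\<bar>" by (rule s2l)
    show "x \<in> {epoint (a0 + pi + t) | t. \<bar>t\<bar> \<le> t2}"
    proof (cases "t \<ge> 0")
      case True
      then have "x = epoint (a0 + pi + (t - pi))" "\<bar>t - pi\<bar> \<le> t2" using t st by (auto simp: t2_def)
      then show ?thesis by blast
    next
      case False
      have "epoint (a0 + pi + (t + pi)) = epoint (a0 + t)" using epoint_2pi[of "a0+t"] by (simp add: algebra_simps)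
      then have "x = epoint (a0 + pi + (t + pi))" "\<bar>t + pi\<bar> \<le> t2" using t st False
        by (auto simp: t2_def)
      then show ?thesis by blast
    qed
  next
    fix x assume "x \<in> {epoint (a0 + pi + t) | t. \<bar>t\<bar> \<le> t2}"
    then obtain t where t: "\<bar>t\<bar> \<le> t2" "x = epoint (a0 + pi + t)" by blast
    have "v x = f (a0 + (pi - \<bar>t\<bar>))"
    proof (cases "t \<le> 0")
      case True then show ?thesis using t fd by (simp add: add.assoc)
    next
      case False
      have "v x = f (a0 + pi + t - 2*pi)" using t fd per[of "a0 + pi + t - 2*pi"] by (simp add: ac_simps)
      also have "\<dots> = f (a0 - (pi - t))" by (simp add: algebra_simps)
      also have "\<dots> = f (a0 + (pi - t))" by (rule sym)
      finally show ?thesis using False by simp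
    qed
    moreover have "f (a0 + pi) \<le> f (a0 + (pi - \<bar>t\<bar>))" "f (a0 + (pi - \<bar>t\<bar>)) \<le> f (a0 + s2)"
      using t s2p by (intro mono; simp add: t2_def)+
    ultimately have "v x = Mn" using s2p by (simp add: Mn_def)
    then show "x \<in> {x\<in>circ. v x = Mn}" using t epoint_circ by simp
  qed
  have half: "\<forall>x\<in>half_circ a0. v x = v (refl_line a0 x)"
  proof
    fix x assume "x \<in> half_circ a0"
    then obtain t where "x = epoint (a0 + t)" unfolding half_circ_def by blast
    then show "v x = v (refl_line a0 x)" using refl_epoint sym fd by metis
  qed
  have ne: "v (epoint a0) \<noteq> v (epoint (a0 + pi))" using MM fd by (simp add: Mx_def Mn_def)
  have mon: "\<forall>a b. a0 \<le> a \<and> a \<le> b \<and> b < a0 + pi \<longrightarrow> v (epoint b) \<le> v (epoint a)"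
    using mono fd by auto
  show ?thesis
    apply (rule exI[of _ a0], rule exI[of _ t1], rule exI[of _ t2])
    using a0 t1p ts s2p maxset minset half ne mon SUPe INFe
    by (auto simp: t2_def)
qed


theorem lemma2p1:
  fixes v :: "real \<times> real \<Rightarrow> real"
  assumes cont: "continuous_on circ v"
    and pos: "\<forall>x\<in>circ. v x > 0"
    and sep: "separable v"
    and nonconst: "(SUP x\<in>circ. v x) > (INF x\<in>circ. v x)"
  shows "\<exists>a0 t1 t2. a0 \<in> {0..<2*pi} \<and> t1 \<in> {0..<pi} \<and> t2 \<in> {0..<pi} \<and>
    t1 + t2 < pi \<and>
    {x\<in>circ. v x = (SUP y\<in>circ. v y)} = {epoint (a0 + t) | t. \<bar>t\<bar> \<le> t1} \<and>
    {x\<in>circ. v x = (INF y\<in>circ. v y)} = {epoint (a0 + pi + t) | t. \<bar>t\<bar> \<le> t2} \<and>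
    (\<forall>x\<in>half_circ a0. v x = v (refl_line a0 x)) \<and>
    (\<exists>a b. v (epoint a) \<noteq> v (epoint b)) \<and>
    (\<forall>a b. a0 \<le> a \<and> a \<le> b \<and> b < a0 + pi \<longrightarrow> v (epoint b) \<le> v (epoint a))"
proof -
  define f where "f = (\<lambda>t. v (epoint t))"
  have fd: "\<And>t. f t = v (epoint t)" by (simp add: f_def)
  have per: "\<And>x. f (x + 2*pi) = f x" by (simp add: f_def epoint_2pi)
  have ce: "continuous_on UNIV epoint" unfolding epoint_def by (intro continuous_intros)
  have cf: "continuous_on UNIV f" unfolding f_def
    by (rule continuous_on_compose2[OF cont ce]) (auto simp: epoint_circ)
  have LR0: "Lp f a \<or> Rp f a" if "a \<in> {0..<2*pi}" for a
  proof -
    have "(\<forall>x\<in>half_circ a. v (refl_line a x) \<ge> v x) \<or> (\<forall>x\<in>half_circ a. v (refl_line a x) \<le> v x)"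
      using sep that unfolding separable_def by blast
    moreover have "epoint (a + t) \<in> half_circ a" if "0 < t \<and> t < pi" for t
      using that unfolding half_circ_def by blast
    ultimately show ?thesis unfolding Lp_def Rp_def using refl_epoint fd by metis
  qed
  have LR: "\<And>a. Lp f a \<or> Rp f a" using LR_all[of f, OF per LR0] by blast
  obtain c where c: "Lp f c" "Rp f c" using axis_exists[of f, OF per LR cf] by blast
  obtain x y where nc: "f x \<noteq> f y"
  proof (rule ccontr)
    assume "\<not> thesis"
    then have all: "f x = f 0" for x using that by blast
    have "v ` circ = {f 0}"
    proof
      show "v ` circ \<subseteq> {f 0}" using circ_epoint all fd by fastforce
      show "{f 0} \<subseteq> v ` circ" using epoint_circ fd by auto
    qed
    then show False using nonconst by simp
  qed
  obtain a1 where a1: "Lp f a1" "Rp f a1" "\<forall>\<alpha>\<in>{a1..a1+pi}. Lp f \<alpha>"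
  proof -
    from mono_side[of f, OF per LR cf c nc]
    show ?thesis
    proof
      assume "\<forall>\<alpha>\<in>{c..c+pi}. Lp f \<alpha>" then show ?thesis using that c by blast
    next
      assume R: "\<forall>\<alpha>\<in>{c..c+pi}. Rp f \<alpha>"
      have "Lp f (c + pi)" using R_iff_L[of f, OF per, of c] c by simp
      moreover have "Rp f (c + pi)" using R_iff_L[of f, OF per, of "c+pi"] c
          Lp_shift[of f, OF per, of c 1] by (simp add: ac_simps)
      moreover have "\<forall>\<alpha>\<in>{c+pi..c+pi+pi}. Lp f \<alpha>"
      proof
        fix \<alpha> assume "\<alpha> \<in> {c+pi..c+pi+pi}"
        then have "\<alpha> - pi \<in> {c..c+pi}" by auto
        then have "Lp f (\<alpha> - pi + pi)" using R R_iff_L[of f, OF per] by blast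
        then show "Lp f \<alpha>" by simp
      qed
      ultimately show ?thesis using that by blast
    qed
  qed
  obtain k :: int where k: "a1 - 2*pi * of_int k \<in> {0..<0+2*pi}" using reduce[of a1 0] by blast
  define a0 where "a0 = a1 - 2*pi * of_int k"
  have sh: "Lp f a0 \<longleftrightarrow> Lp f a1" "Rp f a0 \<longleftrightarrow> Rp f a1"
    using Lp_shift[of f, OF per, of a0 k] Rp_shift[of f, OF per, of a0 k] by (simp_all add: a0_def)
  have LJ: "\<forall>\<alpha>\<in>{a0..a0+pi}. Lp f \<alpha>"
  proof
    fix \<alpha> assume "\<alpha> \<in> {a0..a0+pi}"
    then have "\<alpha> + 2*pi * of_int k \<in> {a1..a1+pi}" by (auto simp: a0_def)
    then have "Lp f (\<alpha> + 2*pi * of_int k)" using a1 by blast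
    then show "Lp f \<alpha>" using Lp_shift[of f, OF per] by blast
  qed
  show ?thesis
    by (rule final[OF fd cf per _ _ LJ _ nonconst]) (use sh a1 k a0_def in auto)
qed

end
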